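(* Assume in addition that $f$ is continuously differentiable on $\Theta$. Then there exists $\varepsilon>0$ such that every maximizer $s^*$ of $R_0(s)=\int_0^{\bar\theta}J(\theta)s(\theta)\,dF(\theta)$ over $\mathcal S(0)$ satisfies $s^*(\theta)=F(\theta)$ for almost every $\theta\in[\bar\theta-\varepsilon,\bar\theta]$ (the highest types are fully separated).
   Context: Let $0<\bar\theta<\infty$, $\Theta=[0,\bar\theta]$, $F$ a cdf on $\Theta$ with continuous, strictly positive density $f$, $dF=f\,d\theta$, and $J(\theta)=\theta-\frac{1-F(\theta)}{f(\theta)}$. For bounded measurable $a,b$ on $\Theta$, write $b\in\mathrm{MPS}(a)$ if $\int_x^{\bar\theta}b\,dF\le\int_x^{\bar\theta}a\,dF$ for all $x\in\Theta$, with equality at $x=0$. $\mathcal S(0)$ is the set of nondecreasing $s:\Theta\to[0,1]$ with $s\in\mathrm{MPS}(F)$. *)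

theory Defs
  imports "HOL-Analysis.Analysis"
begin

text \<open>Theta = {0..tb}; dF = f d(theta). Integrals are Lebesgue integrals w.r.t. lborel.\<close>

definition virt_val :: "(real \<Rightarrow> real) \<Rightarrow> (real \<Rightarrow> real) \<Rightarrow> real \<Rightarrow> real" where
  "virt_val F f \<theta> = \<theta> - (1 - F \<theta>) / f \<theta>"

definition in_MPS :: "real \<Rightarrow> (real \<Rightarrow> real) \<Rightarrow> (real \<Rightarrow> real) \<Rightarrow> (real \<Rightarrow> real) \<Rightarrow> bool" where
  "in_MPS tb f b a \<longleftrightarrow>
     bounded (b ` {0..tb}) \<and> bounded (a ` {0..tb}) \<and>
     set_borel_measurable lborel {0..tb} b \<and> set_borel_measurable lborel {0..tb} a \<and>
     (\<forall>x\<in>{0..tb}. (LINT t:{x..tb}|lborel. b t * f t) \<le> (LINT t:{x..tb}|lborel. a t * f t)) \<and>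
     (LINT t:{0..tb}|lborel. b t * f t) = (LINT t:{0..tb}|lborel. a t * f t)"

definition S0 :: "real \<Rightarrow> (real \<Rightarrow> real) \<Rightarrow> (real \<Rightarrow> real) \<Rightarrow> (real \<Rightarrow> real) set" where
  "S0 tb f F = {s. mono_on {0..tb} s \<and> (\<forall>\<theta>\<in>{0..tb}. s \<theta> \<in> {0..1}) \<and> in_MPS tb f s F}"

definition R0 :: "real \<Rightarrow> (real \<Rightarrow> real) \<Rightarrow> (real \<Rightarrow> real) \<Rightarrow> (real \<Rightarrow> real) \<Rightarrow> real" where
  "R0 tb f F s = (LINT \<theta>:{0..tb}|lborel. virt_val F f \<theta> * s \<theta> * f \<theta>)"

end

theory Submission imports Defs begin

lemma icomb: "a \<le> c \<Longrightarrow> c \<le> b \<Longrightarrow> g integrable_on {a..b} \<Longrightarrow> integral {a..c} g + integral {c..b} g = integral {a..b} (g::real\<Rightarrow>real)"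
  by (rule Henstock_Kurzweil_Integration.integral_combine)

locale setting =
  fixes tb :: real and f F f' :: "real \<Rightarrow> real"
  assumes tb_pos: "0 < tb"
    and f_cont: "continuous_on {0..tb} f"
    and f_pos: "\<And>\<theta>. \<theta> \<in> {0..tb} \<Longrightarrow> 0 < f \<theta>"
    and F_def: "\<And>\<theta>. \<theta> \<in> {0..tb} \<Longrightarrow> F \<theta> = (LINT t:{0..\<theta>}|lborel. f t)"
    and F_tb: "F tb = 1"
    and f_C1: "continuous_on {0..tb} f'"
    and f_deriv: "\<And>\<theta>. \<theta> \<in> {0..tb} \<Longrightarrow> (f has_real_derivative f' \<theta>) (at \<theta> within {0..tb})"
begin

definition MB :: "(real \<Rightarrow> real) \<Rightarrow> bool" where
  "MB g \<longleftrightarrow> set_borel_measurable lborel {0..tb} g \<and> bounded (g ` {0..tb})"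

lemma MB_setint:
  assumes "MB g" "0 \<le> a" "b \<le> tb"
  shows "set_integrable lborel {a..b} g"
proof -
  from assms obtain B where B: "\<forall>x\<in>{0..tb}. norm (g x) \<le> B"
    by (auto simp: MB_def bounded_iff)
  have "set_integrable lborel {0..tb} g"
    unfolding set_integrable_def
    apply (rule integrableI_bounded_set[where A="{0..tb}" and B=B])
    using assms B tb_pos by (auto simp: MB_def set_borel_measurable_def indicator_def)
  then show ?thesis by (rule set_integrable_subset) (use assms in auto)
qed

lemma MB_LINT: "MB g \<Longrightarrow> 0 \<le> a \<Longrightarrow> b \<le> tb \<Longrightarrow> (LINT t:{a..b}|lborel. g t) = integral {a..b} g"
  using MB_setint set_borel_integral_eq_integral(2) by blast

lemma MB_integrable: "MB g \<Longrightarrow> 0 \<le> a \<Longrightarrow> b \<le> tb \<Longrightarrow> g integrable_on {a..b}"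
  using MB_setint set_borel_integral_eq_integral(1) by blast

lemma MB_cont: assumes "continuous_on {0..tb} g" shows "MB g"
proof -
  have "(\<lambda>x. indicator {0..tb} x *\<^sub>R g x) \<in> borel_measurable borel"
    by (rule borel_measurable_continuous_on_indicator) (use assms in auto)
  then have "set_borel_measurable lborel {0..tb} g"
    unfolding set_borel_measurable_def by simp
  moreover have "bounded (g ` {0..tb})"
    using compact_continuous_image[OF assms] compact_imp_bounded by blast
  ultimately show ?thesis by (simp add: MB_def)
qed

lemma MB_mono: assumes "mono_on {0..tb} g" "bounded (g ` {0..tb})" shows "MB g"
proof -
  have "g \<in> borel_measurable (restrict_space borel {0..tb})"
    by (rule borel_measurable_mono_on_fnc) fact
  then have "(\<lambda>x. indicator {0..tb} x *\<^sub>R g x) \<in> borel_measurable borel"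
    by (subst (asm) borel_measurable_restrict_space_iff) auto
  then show ?thesis using assms unfolding MB_def set_borel_measurable_def by simp
qed

lemma MB_mult: assumes "MB g" "MB h" shows "MB (\<lambda>t. g t * h t)"
proof -
  have eq: "(\<lambda>x. indicator {0..tb} x *\<^sub>R (g x * h x)) = (\<lambda>x. (indicator {0..tb} x *\<^sub>R g x) * (indicator {0..tb} x *\<^sub>R h x))"
    by (auto simp: indicator_def fun_eq_iff)
  have "set_borel_measurable lborel {0..tb} (\<lambda>t. g t * h t)"
    using assms unfolding MB_def set_borel_measurable_def eq by (intro borel_measurable_times) auto
  moreover
  from assms obtain B1 B2 where "\<forall>x\<in>{0..tb}. norm (g x) \<le> B1" "\<forall>x\<in>{0..tb}. norm (h x) \<le> B2"
    by (auto simp: MB_def bounded_iff)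
  then have "\<forall>x\<in>{0..tb}. norm (g x * h x) \<le> B1 * B2"
    by (auto simp: abs_mult intro!: mult_mono)
  then have "bounded ((\<lambda>t. g t * h t) ` {0..tb})" by (auto simp: bounded_iff)
  ultimately show ?thesis by (simp add: MB_def)
qed

lemma MB_add: assumes "MB g" "MB h" shows "MB (\<lambda>t. g t + h t)"
proof -
  have eq: "(\<lambda>x. indicator {0..tb} x *\<^sub>R (g x + h x)) = (\<lambda>x. (indicator {0..tb} x *\<^sub>R g x) + (indicator {0..tb} x *\<^sub>R h x))"
    by (auto simp: indicator_def fun_eq_iff)
  have "set_borel_measurable lborel {0..tb} (\<lambda>t. g t + h t)"
    using assms unfolding MB_def set_borel_measurable_def eq by (intro borel_measurable_add) auto
  moreover
  from assms obtain B1 B2 where "\<forall>x\<in>{0..tb}. norm (g x) \<le> B1" "\<forall>x\<in>{0..tb}. norm (h x) \<le> B2"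
    by (auto simp: MB_def bounded_iff)
  then have "\<forall>x\<in>{0..tb}. norm (g x + h x) \<le> B1 + B2"
    by (auto intro!: order_trans[OF abs_triangle_ineq] add_mono)
  then have "bounded ((\<lambda>t. g t + h t) ` {0..tb})" by (auto simp: bounded_iff)
  ultimately show ?thesis by (simp add: MB_def)
qed

lemma MB_const: "MB (\<lambda>t. c)"
  by (rule MB_cont) auto

lemma MB_diff: assumes "MB g" "MB h" shows "MB (\<lambda>t. g t - h t)"
proof -
  have "MB (\<lambda>t. g t + (-1) * h t)"
    by (intro MB_add MB_mult MB_const assms)
  then show ?thesis by simp
qed

lemma f_integrable: "0 \<le> a \<Longrightarrow> b \<le> tb \<Longrightarrow> f integrable_on {a..b}"
  by (rule integrable_continuous_real) (auto intro: continuous_on_subset[OF f_cont])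

lemma F_int: "\<theta> \<in> {0..tb} \<Longrightarrow> F \<theta> = integral {0..\<theta>} f"
  using F_def MB_LINT[OF MB_cont[OF f_cont]] by auto

lemma F_diff: "0 \<le> a \<Longrightarrow> a \<le> b \<Longrightarrow> b \<le> tb \<Longrightarrow> F b - F a = integral {a..b} f"
  using F_int[of a] F_int[of b] icomb[where g=f and a=0 and c=a and b=b] f_integrable[of 0 b] by auto

lemma int_f_pos: assumes "0 \<le> a" "a < b" "b \<le> tb" shows "integral {a..b} f > 0"
proof -
  have c: "continuous_on (cbox a b) f" using assms by (auto intro: continuous_on_subset[OF f_cont])
  have nn: "\<And>x. x \<in> cbox a b \<Longrightarrow> f x \<ge> 0" using assms f_pos by (fastforce simp: less_imp_le)
  have "integral (cbox a b) f \<noteq> 0"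
    using integral_cbox_eq_0_iff[OF c _ nn] assms f_pos[of a] by auto
  moreover have "integral {a..b} f \<ge> 0"
    using nn by (intro integral_nonneg) (auto intro: f_integrable simp: assms)
  ultimately show ?thesis by auto
qed

lemma F_strict: "0 \<le> a \<Longrightarrow> a < b \<Longrightarrow> b \<le> tb \<Longrightarrow> F a < F b"
  using F_diff[of a b] int_f_pos[of a b] by auto

lemma F_mono: "0 \<le> a \<Longrightarrow> a \<le> b \<Longrightarrow> b \<le> tb \<Longrightarrow> F a \<le> F b"
  using F_strict[of a b] by (cases "a = b") auto

lemma F_0: "F 0 = 0"
  using F_int[of 0] tb_pos by auto

lemma F_range: "\<theta> \<in> {0..tb} \<Longrightarrow> 0 \<le> F \<theta> \<and> F \<theta> \<le> 1"
  using F_mono[of 0 \<theta>] F_mono[of \<theta> tb] F_0 F_tb by auto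

lemma F_deriv: "\<theta> \<in> {0..tb} \<Longrightarrow> (F has_real_derivative f \<theta>) (at \<theta> within {0..tb})"
  apply (rule has_field_derivative_transform_within[OF integral_has_real_derivative[OF f_cont], where d=1])
  using F_int by auto

lemma F_cont: "continuous_on {0..tb} F"
  using F_deriv DERIV_continuous continuous_on_eq_continuous_within by blast

definition J :: "real \<Rightarrow> real" where "J = virt_val F f"
definition J' :: "real \<Rightarrow> real" where "J' \<theta> = 2 + (1 - F \<theta>) * f' \<theta> / (f \<theta>)^2"

lemma J_eq: "J \<theta> = \<theta> - (1 - F \<theta>) / f \<theta>"
  by (simp add: J_def virt_val_def)

lemma J_deriv: assumes "\<theta> \<in> {0..tb}" shows "(J has_real_derivative J' \<theta>) (at \<theta> within {0..tb})"
proof -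
  have fne: "f \<theta> \<noteq> 0" using f_pos[OF assms] by auto
  have "((\<lambda>\<theta>. \<theta> - (1 - F \<theta>) / f \<theta>) has_real_derivative
      (1 - ((0 - f \<theta>) * f \<theta> - (1 - F \<theta>) * f' \<theta>) / (f \<theta> * f \<theta>))) (at \<theta> within {0..tb})"
    by (intro DERIV_diff DERIV_divide DERIV_ident DERIV_const F_deriv f_deriv assms fne)
  moreover have "(1 - ((0 - f \<theta>) * f \<theta> - (1 - F \<theta>) * f' \<theta>) / (f \<theta> * f \<theta>)) = J' \<theta>"
    using fne by (simp add: J'_def field_simps power2_eq_square)
  ultimately show ?thesis by (simp add: J_eq[abs_def])
qed

lemma J_cont: "continuous_on {0..tb} J"
  using J_deriv DERIV_continuous continuous_on_eq_continuous_within by blast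

lemma J'_cont: "continuous_on {0..tb} J'"
proof -
  have "continuous_on {0..tb} (\<lambda>\<theta>. 2 + (1 - F \<theta>) * f' \<theta> / (f \<theta>)^2)"
    using f_pos by (intro continuous_intros F_cont f_C1 f_cont) fastforce
  then show ?thesis by (simp add: J'_def[abs_def])
qed

lemma J_le: "\<theta> \<in> {0..tb} \<Longrightarrow> J \<theta> \<le> \<theta>"
  using F_range[of \<theta>] f_pos[of \<theta>] by (simp add: J_eq)

lemma J_tb: "J tb = tb" by (simp add: J_eq F_tb)
lemma J'_tb: "J' tb = 2" by (simp add: J'_def F_tb)

lemma J_mono: assumes "0 \<le> a" "a \<le> b" "b \<le> tb" "\<And>z. z \<in> {a..b} \<Longrightarrow> J' z \<ge> 0"
  shows "J a \<le> J b"
proof (rule DERIV_nonneg_imp_increasing_open[OF assms(2)])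
  fix x assume x: "a < x" "x < b"
  have "(J has_real_derivative J' x) (at x within {0..tb})" using x assms by (intro J_deriv) auto
  moreover have "at x within {0..tb} = at x" using x assms by (intro at_within_Icc_at) auto
  ultimately show "\<exists>y. (J has_real_derivative y) (at x) \<and> 0 \<le> y" using assms x by auto
next
  show "continuous_on {a..b} J" using assms by (auto intro: continuous_on_subset[OF J_cont])
qed

lemma eps_exists: "\<exists>\<epsilon>>0. \<epsilon> \<le> tb \<and> (\<forall>m\<in>{tb-\<epsilon>..tb}. (\<forall>x\<in>{0..m}. J x \<le> J m) \<and> (\<forall>z\<in>{m..tb}. J' z > 0))"
proof -
  obtain d1 where d1: "d1 > 0" "\<And>x. x \<in> {0..tb} \<Longrightarrow> dist x tb < d1 \<Longrightarrow> dist (J' x) (J' tb) < 1"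
    using J'_cont tb_pos unfolding continuous_on_iff by (metis atLeastAtMost_iff less_imp_le order_refl zero_less_one)
  define \<delta> where "\<delta> = min (d1/2) tb"
  have \<delta>: "\<delta> > 0" "\<delta> \<le> tb" using d1 tb_pos by (auto simp: \<delta>_def)
  have J'pos: "J' z > 0" if "z \<in> {tb-\<delta>..tb}" for z
  proof -
    have "dist z tb < d1" using that d1 by (auto simp: \<delta>_def dist_real_def)
    then have "dist (J' z) (J' tb) < 1" using d1 that \<delta> by auto
    then show ?thesis using J'_tb by (auto simp: dist_real_def)
  qed
  obtain d2 where d2: "d2 > 0" "\<And>x. x \<in> {0..tb} \<Longrightarrow> dist x tb < d2 \<Longrightarrow> dist (J x) (J tb) < \<delta>"
    using J_cont tb_pos \<delta> unfolding continuous_on_iff by (metis atLeastAtMost_iff less_imp_le order_refl)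
  define \<epsilon> where "\<epsilon> = min (d2/2) \<delta>"
  have \<epsilon>: "\<epsilon> > 0" "\<epsilon> \<le> \<delta>" using d2 \<delta> by (auto simp: \<epsilon>_def)
  have "(\<forall>x\<in>{0..m}. J x \<le> J m) \<and> (\<forall>z\<in>{m..tb}. J' z > 0)" if m: "m \<in> {tb-\<epsilon>..tb}" for m
  proof
    show "\<forall>z\<in>{m..tb}. J' z > 0" using m \<epsilon> J'pos by auto
    have Jm: "J m > tb - \<delta>"
    proof -
      have "dist m tb < d2" using m d2 by (auto simp: \<epsilon>_def dist_real_def)
      then have "dist (J m) (J tb) < \<delta>" using d2 m \<epsilon> \<delta> by auto
      then show ?thesis using J_tb by (auto simp: dist_real_def)
    qed
    show "\<forall>x\<in>{0..m}. J x \<le> J m"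
    proof
      fix x assume x: "x \<in> {0..m}"
      show "J x \<le> J m"
      proof (cases "x \<le> tb - \<delta>")
        case True
        then show ?thesis using J_le[of x] x m Jm by auto
      next
        case False
        then show ?thesis using x m \<epsilon> by (intro J_mono less_imp_le[OF J'pos]) auto
      qed
    qed
  qed
  then show ?thesis using \<epsilon> \<delta> by (intro exI[of _ \<epsilon>]) auto
qed

lemma MB_mono': "mono_on {0..tb} g \<Longrightarrow> (\<And>t. t \<in> {0..tb} \<Longrightarrow> \<bar>g t\<bar> \<le> B) \<Longrightarrow> MB g"
  by (rule MB_mono, assumption, unfold bounded_iff, rule exI[of _ B], auto)

lemma MB_f: "MB f" by (rule MB_cont[OF f_cont])
lemma MB_F: "MB F" by (rule MB_cont[OF F_cont])
lemma MB_J: "MB J" by (rule MB_cont[OF J_cont])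
lemma MB_J': "MB J'" by (rule MB_cont[OF J'_cont])

lemmas MB_intros = MB_mult MB_diff MB_add MB_const MB_f MB_F MB_J MB_J'

lemma R0_eq: assumes "MB u" shows "R0 tb f F u = integral {0..tb} (\<lambda>\<theta>. J \<theta> * u \<theta> * f \<theta>)"
proof -
  have "R0 tb f F u = (LINT \<theta>:{0..tb}|lborel. J \<theta> * u \<theta> * f \<theta>)" by (simp add: R0_def J_def)
  also have "\<dots> = integral {0..tb} (\<lambda>\<theta>. J \<theta> * u \<theta> * f \<theta>)"
    using tb_pos by (intro MB_LINT MB_mult[OF MB_mult[OF MB_J assms] MB_f]) auto
  finally show ?thesis .
qed

lemma spike1: "(\<And>t. t \<in> {a..b} \<Longrightarrow> t \<noteq> c \<Longrightarrow> g t = h t) \<Longrightarrow> integral {a..b} g = integral {a..b} (h::real\<Rightarrow>real)"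
  by (rule integral_spike[of "{c}"]) auto

end

locale sol = setting +
  fixes s :: "real \<Rightarrow> real"
  assumes s_S0: "s \<in> S0 tb f F"
begin

lemma s_mono: "mono_on {0..tb} s" using s_S0 by (simp add: S0_def)
lemma s_mono': "0 \<le> x \<Longrightarrow> x \<le> y \<Longrightarrow> y \<le> tb \<Longrightarrow> s x \<le> s y"
  using s_mono by (auto simp: mono_on_def)
lemma s_range: "t \<in> {0..tb} \<Longrightarrow> 0 \<le> s t \<and> s t \<le> 1" using s_S0 by (simp add: S0_def)
lemma MB_s: "MB s" using s_range by (intro MB_mono'[OF s_mono, of 1]) auto

lemma s_tail: "x \<in> {0..tb} \<Longrightarrow> integral {x..tb} (\<lambda>t. s t * f t) \<le> integral {x..tb} (\<lambda>t. F t * f t)"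
  using s_S0 MB_LINT[of "\<lambda>t. s t * f t"] MB_LINT[of "\<lambda>t. F t * f t"] MB_mult[OF MB_s MB_f] MB_mult[OF MB_F MB_f]
  by (auto simp: S0_def in_MPS_def)

lemma s_total: "integral {0..tb} (\<lambda>t. s t * f t) = integral {0..tb} (\<lambda>t. F t * f t)"
  using s_S0 MB_LINT[of "\<lambda>t. s t * f t"] MB_LINT[of "\<lambda>t. F t * f t"] MB_mult[OF MB_s MB_f] MB_mult[OF MB_F MB_f] tb_pos
  by (auto simp: S0_def in_MPS_def)

definition \<phi> :: "real \<Rightarrow> real" where "\<phi> t = (F t - s t) * f t"
definition D :: "real \<Rightarrow> real" where "D z = integral {z..tb} \<phi>"

lemma MB_\<phi>: "MB \<phi>" unfolding \<phi>_def[abs_def] by (intro MB_intros MB_s)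

lemma \<phi>_int: "0 \<le> a \<Longrightarrow> b \<le> tb \<Longrightarrow> \<phi> integrable_on {a..b}"
  using MB_integrable[OF MB_\<phi>] by auto

lemma D_nonneg: assumes "z \<in> {0..tb}" shows "D z \<ge> 0"
proof -
  have i1: "(\<lambda>t. F t * f t) integrable_on {z..tb}" using assms
    by (intro MB_integrable MB_mult[OF MB_F MB_f]) auto
  have i2: "(\<lambda>t. s t * f t) integrable_on {z..tb}" using assms
    by (intro MB_integrable MB_mult[OF MB_s MB_f]) auto
  have "D z = integral {z..tb} (\<lambda>t. F t * f t) - integral {z..tb} (\<lambda>t. s t * f t)"
    unfolding D_def \<phi>_def left_diff_distrib
    using integral_diff[OF i1 i2] by simp
  then show ?thesis using s_tail[OF assms] by simp
qed

lemma D_0: "D 0 = 0"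
proof -
  have "D 0 = integral {0..tb} (\<lambda>t. F t * f t) - integral {0..tb} (\<lambda>t. s t * f t)"
    unfolding D_def \<phi>_def left_diff_distrib
    by (intro integral_diff MB_integrable MB_intros MB_s) auto
  then show ?thesis using s_total by simp
qed

lemma D_tb: "D tb = 0" by (simp add: D_def)

lemma D_split: assumes "0 \<le> a" "a \<le> b" "b \<le> tb" shows "D a = integral {a..b} \<phi> + D b"
proof -
  have "\<phi> integrable_on {a..tb}" using assms by (intro \<phi>_int) auto
  from icomb[OF assms(2) assms(3) this] show ?thesis unfolding D_def by simp
qed

lemma D_cont: "continuous_on {0..tb} D"
proof -
  have c1: "continuous_on {0..tb} (\<lambda>x. integral {0..x} \<phi>)"
    by (rule indefinite_integral_continuous_1[OF \<phi>_int]) auto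
  have c2: "continuous_on {0..tb} (\<lambda>x. integral {0..tb} \<phi> - integral {0..x} \<phi>)"
    by (rule continuous_on_diff[OF continuous_on_const c1])
  have eq: "integral {0..tb} \<phi> - integral {0..x} \<phi> = D x" if "x \<in> {0..tb}" for x
    using D_split[of 0 x] that D_def[of 0] by auto
  show ?thesis by (rule continuous_on_eq[OF c2 eq])
qed

lemma \<phi>_bound: "\<exists>B>0. \<forall>t\<in>{0..tb}. \<bar>\<phi> t\<bar> \<le> B"
proof -
  obtain B where "\<forall>t\<in>{0..tb}. norm (\<phi> t) \<le> B" using MB_\<phi> by (auto simp: MB_def bounded_iff)
  then have "\<forall>t\<in>{0..tb}. \<bar>\<phi> t\<bar> \<le> max B 1" by fastforce
  then show ?thesis by (intro exI[of _ "max B 1"]) simp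
qed

end

locale pert = sol +
  fixes m :: real
  assumes m_range: "m \<in> {0..tb}"
    and good: "\<And>x. x \<in> {0..m} \<Longrightarrow> s x \<le> F m"
begin

definition r :: "real \<Rightarrow> real" where "r L = integral {0..m} (\<lambda>t. max (s t - L) 0 * f t)"

lemma MB_maxL: "MB (\<lambda>t. max (s t - L) 0)"
proof (rule MB_mono'[where B="1 + \<bar>L\<bar>"])
  show "mono_on {0..tb} (\<lambda>t. max (s t - L) 0)"
  proof (rule mono_onI)
    fix x y assume "x \<in> {0..tb}" "y \<in> {0..tb}" "x \<le> y"
    then have "s x \<le> s y" by (intro s_mono') auto
    then show "max (s x - L) 0 \<le> max (s y - L) 0" unfolding max_def by auto
  qed
  fix t assume "t \<in> {0..tb}" then show "\<bar>max (s t - L) 0\<bar> \<le> 1 + \<bar>L\<bar>"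
    using s_range[of t] by auto
qed

lemma MB_minL: "MB (\<lambda>t. min (s t) L)"
proof (rule MB_mono'[where B="1 + \<bar>L\<bar>"])
  show "mono_on {0..tb} (\<lambda>t. min (s t) L)"
  proof (rule mono_onI)
    fix x y assume "x \<in> {0..tb}" "y \<in> {0..tb}" "x \<le> y"
    then have "s x \<le> s y" by (intro s_mono') auto
    then show "min (s x) L \<le> min (s y) L" unfolding min_def by auto
  qed
  fix t assume "t \<in> {0..tb}" then show "\<bar>min (s t) L\<bar> \<le> 1 + \<bar>L\<bar>"
    using s_range[of t] by auto
qed

lemma maxL_int: "(\<lambda>t. max (s t - L) 0 * f t) integrable_on {0..m}"
  using m_range by (intro MB_integrable MB_mult[OF MB_maxL MB_f]) auto

lemma r_lip1: "r a - r b \<le> \<bar>a - b\<bar> * integral {0..m} f"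
proof -
  have fi: "f integrable_on {0..m}" using m_range by (intro f_integrable) auto
  have eq: "r a - r b = integral {0..m} (\<lambda>t. max (s t - a) 0 * f t - max (s t - b) 0 * f t)"
    unfolding r_def by (rule integral_diff[OF maxL_int maxL_int, symmetric])
  have di: "(\<lambda>t. max (s t - a) 0 * f t - max (s t - b) 0 * f t) integrable_on {0..m}"
    by (rule integrable_diff[OF maxL_int maxL_int])
  have ci: "(\<lambda>t. \<bar>a - b\<bar> * f t) integrable_on {0..m}"
    using integrable_on_cmult_left[OF fi, of "\<bar>a - b\<bar>"] by simp
  have pw: "max (s t - a) 0 * f t - max (s t - b) 0 * f t \<le> \<bar>a - b\<bar> * f t" if "t \<in> {0..m}" for t
  proof -
    have "f t > 0" using that m_range f_pos by auto
    moreover have "max (s t - a) 0 - max (s t - b) 0 \<le> \<bar>a - b\<bar>" by auto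
    ultimately show ?thesis
      by (metis left_diff_distrib mult_right_mono less_imp_le)
  qed
  have "integral {0..m} (\<lambda>t. max (s t - a) 0 * f t - max (s t - b) 0 * f t) \<le> integral {0..m} (\<lambda>t. \<bar>a - b\<bar> * f t)"
    using pw by (intro Henstock_Kurzweil_Integration.integral_le di ci) auto
  then show ?thesis unfolding eq by simp
qed

lemma r_lip: "\<bar>r a - r b\<bar> \<le> \<bar>a - b\<bar> * integral {0..m} f"
  using r_lip1[of a b] r_lip1[of b a] by (auto simp: abs_le_iff abs_minus_commute)

lemma r_cont: "continuous_on UNIV r"
proof -
  define C where "C = integral {0..m} f"
  have C: "C \<ge> 0" unfolding C_def using m_range f_pos
    by (intro Henstock_Kurzweil_Integration.integral_nonneg f_integrable) (auto simp: less_imp_le)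
  show ?thesis unfolding continuous_on_iff
  proof (intro ballI allI impI)
    fix x e :: real assume e: "e > 0"
    show "\<exists>d>0. \<forall>x'\<in>UNIV. dist x' x < d \<longrightarrow> dist (r x') (r x) < e"
    proof (intro exI[of _ "e / (C + 1)"] conjI ballI impI)
      show "e / (C + 1) > 0" using e C by auto
      fix y assume "dist y x < e / (C + 1)"
      then have "\<bar>y - x\<bar> * (C + 1) < e" using C by (simp add: dist_real_def field_simps)
      moreover have "\<bar>r y - r x\<bar> \<le> \<bar>y - x\<bar> * C" using r_lip[of y x] by (simp add: C_def)
      moreover have "\<bar>y - x\<bar> * C \<le> \<bar>y - x\<bar> * (C + 1)" by (simp add: mult_left_mono)
      ultimately show "dist (r y) (r x) < e" by (simp add: dist_real_def)
    qed
  qed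
qed

lemma r_Fm: "r (F m) = 0"
proof -
  have "r (F m) = integral {0..m} (\<lambda>t. 0::real)"
    unfolding r_def by (rule integral_cong) (use good in auto)
  then show ?thesis by simp
qed

lemma Fm_nonneg: "F m \<ge> 0" using F_range m_range by auto

lemma int_split_m: "integral {0..m} \<phi> = - D m"
  using D_split[of 0 m] D_0 m_range by auto

lemma r_0: "r 0 \<ge> D m"
proof -
  have "r 0 = integral {0..m} (\<lambda>t. s t * f t)"
    unfolding r_def by (rule integral_cong) (use s_range m_range in auto)
  moreover have "integral {0..m} \<phi> = integral {0..m} (\<lambda>t. F t * f t) - integral {0..m} (\<lambda>t. s t * f t)"
    unfolding \<phi>_def left_diff_distrib using m_range
    by (intro integral_diff MB_integrable MB_mult[OF MB_F MB_f] MB_mult[OF MB_s MB_f]) auto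
  moreover have "integral {0..m} (\<lambda>t. F t * f t) \<ge> 0"
    using m_range F_range f_pos
    by (intro Henstock_Kurzweil_Integration.integral_nonneg MB_integrable MB_mult[OF MB_F MB_f])
       (auto intro!: mult_nonneg_nonneg simp: less_imp_le)
  ultimately show ?thesis using int_split_m by linarith
qed

lemma L_exists: "\<exists>L. 0 \<le> L \<and> L \<le> F m \<and> r L = D m"
  using IVT2'[of r "F m" "D m" 0] r_Fm r_0 D_nonneg[of m] m_range Fm_nonneg
    continuous_on_subset[OF r_cont]
  by auto

end

locale pert2 = pert +
  fixes L :: real
  assumes L0: "0 \<le> L" and LF: "L \<le> F m" and rL: "r L = D m"
begin

definition sp :: "real \<Rightarrow> real" where "sp x = (if x \<le> m then min (s x) L else F x)"

lemma m0: "0 \<le> m" and mtb: "m \<le> tb" using m_range by auto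

lemma sp_mono: "mono_on {0..tb} sp"
proof (rule mono_onI)
  fix x y assume xy: "x \<in> {0..tb}" "y \<in> {0..tb}" "x \<le> y"
  show "sp x \<le> sp y"
  proof (cases "y \<le> m")
    case True
    then have "s x \<le> s y" using xy by (intro s_mono') auto
    then show ?thesis using True xy by (auto simp: sp_def min_def)
  next
    case False
    then have Fy: "F m \<le> F y" using xy m0 by (intro F_mono) auto
    show ?thesis
    proof (cases "x \<le> m")
      case True
      then show ?thesis using False Fy LF by (auto simp: sp_def min_def)
    next
      case False
      then show ?thesis using \<open>\<not> y \<le> m\<close> xy m0 F_mono[of x y] by (auto simp: sp_def)
    qed
  qed
qed

lemma sp_range: "t \<in> {0..tb} \<Longrightarrow> 0 \<le> sp t \<and> sp t \<le> 1"
  using s_range[of t] F_range[of t] L0 by (auto simp: sp_def min_def)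

lemma MB_sp: "MB sp"
  by (rule MB_mono'[OF sp_mono, of 1]) (use sp_range in fastforce)

definition g :: "real \<Rightarrow> real" where "g t = (F t - min (s t) L) * f t"
definition E :: "real \<Rightarrow> real" where "E x = integral {x..m} g"

lemma MB_g: "MB g" unfolding g_def[abs_def] by (intro MB_mult MB_diff MB_F MB_minL MB_f)

lemma g_int: "0 \<le> a \<Longrightarrow> b \<le> tb \<Longrightarrow> g integrable_on {a..b}"
  using MB_integrable[OF MB_g] by auto

lemma g_split: "g t = \<phi> t + max (s t - L) 0 * f t"
  unfolding g_def \<phi>_def by (auto simp: min_def max_def algebra_simps)

lemma E0: "E 0 = 0"
proof -
  have "E 0 = integral {0..m} (\<lambda>t. \<phi> t + max (s t - L) 0 * f t)"
    unfolding E_def g_split ..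
  also have "\<dots> = integral {0..m} \<phi> + r L"
    unfolding r_def using m_range by (intro integral_add \<phi>_int maxL_int) auto
  also have "\<dots> = 0" using int_split_m rL by simp
  finally show ?thesis .
qed

lemma E_nonneg: assumes x: "x \<in> {0..m}" shows "E x \<ge> 0"
proof (cases "L < s x \<and> L \<le> F x")
  case True
  have "0 \<le> integral {x..m} g"
  proof (rule Henstock_Kurzweil_Integration.integral_nonneg)
    show "g integrable_on {x..m}" using x mtb by (intro g_int) auto
    fix t assume t: "t \<in> {x..m}"
    then have "s x \<le> s t" using x mtb by (intro s_mono') auto
    moreover have "F x \<le> F t" using t x mtb by (intro F_mono) auto
    moreover have "f t > 0" using t x mtb f_pos by auto
    ultimately show "0 \<le> g t" using True by (auto simp: g_def min_def)
  qed
  then show ?thesis by (simp add: E_def)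
next
  case False
  define A where "A = {t \<in> {0..x}. s t \<le> L} \<union> {0}"
  define p where "p = Sup A"
  have Ane: "A \<noteq> {}" and Abdd: "bdd_above A" using x by (auto simp: A_def bdd_above_def)
  have p0: "0 \<le> p" using cSup_upper[OF _ Abdd, of 0] by (simp add: A_def p_def)
  have px: "p \<le> x" unfolding p_def using x by (intro cSup_least[OF Ane]) (auto simp: A_def)
  have c1: "s t \<le> L" if t: "t \<in> {0..p}" "t \<noteq> p" for t
  proof -
    have "t < Sup A" using t by (simp add: p_def)
    then obtain a where a: "a \<in> A" "t < a" using less_cSup_iff[OF Ane Abdd] by auto
    then have "a \<in> {0..x}" "s a \<le> L" using t by (auto simp: A_def)
    moreover have "s t \<le> s a" using a t \<open>a \<in> {0..x}\<close> x mtb by (intro s_mono') auto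
    ultimately show ?thesis by simp
  qed
  have c2: "L < s t" if t: "t \<in> {p..x}" "t \<noteq> p" for t
  proof (rule ccontr)
    assume "\<not> L < s t"
    then have "t \<in> A" using t p0 by (auto simp: A_def)
    then have "t \<le> p" unfolding p_def by (rule cSup_upper[OF _ Abdd])
    then show False using t by auto
  qed
  have "E 0 = integral {0..p} g + E p"
    unfolding E_def using p0 px x mtb by (intro icomb[symmetric] g_int) auto
  moreover have "E p = integral {p..x} g + E x"
    unfolding E_def using p0 px x mtb by (intro icomb[symmetric] g_int) auto
  moreover have "integral {0..p} g = integral {0..p} \<phi>"
    by (rule spike1[of _ _ p]) (use c1 in \<open>auto simp: g_def \<phi>_def min_def\<close>)
  moreover have "integral {0..p} \<phi> = - D p"
    using D_split[of 0 p] D_0 p0 px x mtb by auto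
  moreover have "integral {p..x} g \<le> 0"
  proof (cases "p = x")
    case True then show ?thesis by simp
  next
    case False
    then have "L < s x" using c2[of x] px by auto
    then have Fx: "F x < L" using False \<open>\<not> (L < s x \<and> L \<le> F x)\<close> by auto
    have "integral {p..x} g = integral {p..x} (\<lambda>t. (F t - L) * f t)"
    proof (rule spike1[of _ _ p])
      fix t assume "t \<in> {p..x}" "t \<noteq> p"
      then have "L < s t" by (rule c2)
      then show "g t = (F t - L) * f t" by (simp add: g_def min_def)
    qed
    also have "\<dots> \<le> integral {p..x} (\<lambda>t. 0)"
    proof (rule Henstock_Kurzweil_Integration.integral_le)
      show "(\<lambda>t. (F t - L) * f t) integrable_on {p..x}"
        using p0 x mtb by (intro MB_integrable MB_mult MB_diff MB_F MB_const MB_f) auto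
      fix t assume t: "t \<in> {p..x}"
      then have "F t \<le> F x" using p0 x mtb by (intro F_mono) auto
      moreover have "f t > 0" using t p0 x mtb f_pos by auto
      ultimately show "(F t - L) * f t \<le> 0" using Fx by (simp add: mult_nonpos_nonneg)
    qed (rule integrable_0)
    finally show ?thesis by simp
  qed
  moreover have "D p \<ge> 0" using p0 px x mtb by (intro D_nonneg) auto
  ultimately show ?thesis using E0 by linarith
qed

definition h :: "real \<Rightarrow> real" where "h t = (F t - sp t) * f t"

lemma MB_h: "MB h" unfolding h_def[abs_def] by (intro MB_mult MB_diff MB_F MB_sp MB_f)

lemma tail_sp: assumes x: "x \<in> {0..tb}"
  shows "integral {x..tb} h = (if x \<le> m then E x else 0)"
proof (cases "x \<le> m")
  case True
  have "integral {x..tb} h = integral {x..m} h + integral {m..tb} h"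
    using True x mtb by (intro icomb[symmetric] MB_integrable[OF MB_h]) auto
  moreover have "integral {x..m} h = E x"
    unfolding E_def by (rule integral_cong) (auto simp: h_def g_def sp_def)
  moreover have "integral {m..tb} h = integral {m..tb} (\<lambda>t. 0)"
    by (rule spike1[of _ _ m]) (auto simp: h_def sp_def)
  ultimately show ?thesis using True by simp
next
  case False
  have "integral {x..tb} h = integral {x..tb} (\<lambda>t. 0)"
    by (rule integral_cong) (use False in \<open>auto simp: h_def sp_def\<close>)
  then show ?thesis using False by simp
qed

lemma sp_S0: "sp \<in> S0 tb f F"
proof -
  have MBspf: "MB (\<lambda>t. sp t * f t)" by (intro MB_mult MB_sp MB_f)
  have MBFf: "MB (\<lambda>t. F t * f t)" by (intro MB_mult MB_F MB_f)
  have diff: "integral {x..tb} (\<lambda>t. F t * f t) - integral {x..tb} (\<lambda>t. sp t * f t) = integral {x..tb} h"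
    if "x \<in> {0..tb}" for x
  proof -
    have "integral {x..tb} h = integral {x..tb} (\<lambda>t. F t * f t - sp t * f t)"
      unfolding h_def by (simp add: left_diff_distrib)
    also have "\<dots> = integral {x..tb} (\<lambda>t. F t * f t) - integral {x..tb} (\<lambda>t. sp t * f t)"
      using that by (intro integral_diff MB_integrable[OF MBFf] MB_integrable[OF MBspf]) auto
    finally show ?thesis by simp
  qed
  have tails: "(LINT t:{x..tb}|lborel. sp t * f t) \<le> (LINT t:{x..tb}|lborel. F t * f t)" if "x \<in> {0..tb}" for x
  proof -
    have "integral {x..tb} h \<ge> 0" using tail_sp[OF that] E_nonneg[of x] that by auto
    then show ?thesis using diff[OF that] MB_LINT[OF MBspf, of x tb] MB_LINT[OF MBFf, of x tb] that by auto
  qed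
  have tot: "(LINT t:{0..tb}|lborel. sp t * f t) = (LINT t:{0..tb}|lborel. F t * f t)"
  proof -
    have "integral {0..tb} h = 0" using tail_sp[of 0] E0 m0 tb_pos by auto
    then show ?thesis using diff[of 0] MB_LINT[OF MBspf, of 0 tb] MB_LINT[OF MBFf, of 0 tb] tb_pos by auto
  qed
  show ?thesis
    unfolding S0_def in_MPS_def
    using sp_mono sp_range MB_sp MB_F tails tot by (auto simp: MB_def)
qed

lemma gain: assumes Jm: "\<And>x. x \<in> {0..m} \<Longrightarrow> J x \<le> J m"
  shows "R0 tb f F sp - R0 tb f F s \<ge> integral {m..tb} (\<lambda>t. (J t - J m) * \<phi> t)"
proof -
  define k where "k t = J t * (sp t - s t) * f t" for t
  have MBk: "MB k" unfolding k_def[abs_def] by (intro MB_mult MB_diff MB_J MB_sp MB_s MB_f)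
  have MB1: "MB (\<lambda>\<theta>. J \<theta> * sp \<theta> * f \<theta>)" by (intro MB_mult MB_J MB_sp MB_f)
  have MB2: "MB (\<lambda>\<theta>. J \<theta> * s \<theta> * f \<theta>)" by (intro MB_mult MB_J MB_s MB_f)
  have d: "R0 tb f F sp - R0 tb f F s = integral {0..tb} k"
  proof -
    have "R0 tb f F sp - R0 tb f F s = integral {0..tb} (\<lambda>\<theta>. J \<theta> * sp \<theta> * f \<theta> - J \<theta> * s \<theta> * f \<theta>)"
      unfolding R0_eq[OF MB_sp] R0_eq[OF MB_s]
      by (rule integral_diff[symmetric]; rule MB_integrable) (use MB1 MB2 tb_pos in auto)
    also have "\<dots> = integral {0..tb} k" unfolding k_def by (simp add: algebra_simps)
    finally show ?thesis .
  qed
  have sp1: "integral {0..tb} k = integral {0..m} k + integral {m..tb} k"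
    using m0 mtb by (intro icomb[symmetric] MB_integrable[OF MBk]) auto
  have k1: "integral {0..m} k = - integral {0..m} (\<lambda>t. J t * (max (s t - L) 0 * f t))"
  proof -
    have "integral {0..m} k = integral {0..m} (\<lambda>t. - (J t * (max (s t - L) 0 * f t)))"
      by (rule integral_cong) (auto simp: k_def sp_def min_def max_def algebra_simps)
    then show ?thesis by simp
  qed
  have k1b: "integral {0..m} (\<lambda>t. J t * (max (s t - L) 0 * f t)) \<le> J m * D m"
  proof -
    have "integral {0..m} (\<lambda>t. J t * (max (s t - L) 0 * f t)) \<le> integral {0..m} (\<lambda>t. J m * (max (s t - L) 0 * f t))"
    proof (rule Henstock_Kurzweil_Integration.integral_le)
      show "(\<lambda>t. J t * (max (s t - L) 0 * f t)) integrable_on {0..m}"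
        using mtb by (intro MB_integrable MB_mult MB_J MB_maxL MB_f) auto
      show "(\<lambda>t. J m * (max (s t - L) 0 * f t)) integrable_on {0..m}"
        using mtb by (intro MB_integrable MB_mult MB_const MB_maxL MB_f) auto
      fix t assume t: "t \<in> {0..m}"
      have "max (s t - L) 0 * f t \<ge> 0" using t mtb f_pos[of t] by auto
      then show "J t * (max (s t - L) 0 * f t) \<le> J m * (max (s t - L) 0 * f t)"
        using Jm[OF t] by (rule mult_right_mono[rotated])
    qed
    also have "\<dots> = J m * r L" unfolding r_def by simp
    finally show ?thesis using rL by simp
  qed
  have k2: "integral {m..tb} k = integral {m..tb} (\<lambda>t. J t * \<phi> t)"
    by (rule spike1[of _ _ m]) (auto simp: k_def sp_def \<phi>_def)
  have k3: "integral {m..tb} (\<lambda>t. (J t - J m) * \<phi> t) = integral {m..tb} (\<lambda>t. J t * \<phi> t) - J m * D m"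
  proof -
    have "integral {m..tb} (\<lambda>t. (J t - J m) * \<phi> t) = integral {m..tb} (\<lambda>t. J t * \<phi> t - J m * \<phi> t)"
      by (simp add: left_diff_distrib)
    also have "\<dots> = integral {m..tb} (\<lambda>t. J t * \<phi> t) - integral {m..tb} (\<lambda>t. J m * \<phi> t)"
      using m0 by (intro integral_diff MB_integrable MB_mult MB_J MB_const MB_\<phi>) auto
    also have "integral {m..tb} (\<lambda>t. J m * \<phi> t) = J m * D m" by (simp add: D_def)
    finally show ?thesis .
  qed
  show ?thesis using d sp1 k1 k1b k2 k3 by linarith
qed

end

context sol
begin

definition \<Psi> :: "real \<Rightarrow> real" where "\<Psi> z = integral {z..tb} (\<lambda>y. (J y - J z) * \<phi> y)"

lemma MB_J\<phi>: "MB (\<lambda>t. (J t - J c) * \<phi> t)" by (intro MB_mult MB_diff MB_J MB_const MB_\<phi>)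

lemma shiftJ: assumes "0 \<le> a" "a \<le> tb"
  shows "integral {a..tb} (\<lambda>t. (J t - J c) * \<phi> t) = integral {a..tb} (\<lambda>t. (J t - J d) * \<phi> t) + (J d - J c) * D a"
proof -
  have "integral {a..tb} (\<lambda>t. (J t - J c) * \<phi> t) = integral {a..tb} (\<lambda>t. (J t - J d) * \<phi> t + (J d - J c) * \<phi> t)"
    by (simp add: algebra_simps)
  also have "\<dots> = integral {a..tb} (\<lambda>t. (J t - J d) * \<phi> t) + integral {a..tb} (\<lambda>t. (J d - J c) * \<phi> t)"
    using assms by (intro integral_add MB_integrable MB_J\<phi> MB_mult MB_const MB_\<phi>) auto
  also have "integral {a..tb} (\<lambda>t. (J d - J c) * \<phi> t) = (J d - J c) * D a" by (simp add: D_def)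
  finally show ?thesis .
qed

lemma psi_le: assumes "0 \<le> z" "z \<le> y" "y \<le> tb"
  shows "\<Psi> y - \<Psi> z = - (J y - J z) * D y - integral {z..y} (\<lambda>t. (J t - J z) * \<phi> t)"
proof -
  have "\<Psi> z = integral {z..y} (\<lambda>t. (J t - J z) * \<phi> t) + integral {y..tb} (\<lambda>t. (J t - J z) * \<phi> t)"
    unfolding \<Psi>_def using assms by (intro icomb[symmetric] MB_integrable MB_J\<phi>) auto
  moreover have "integral {y..tb} (\<lambda>t. (J t - J z) * \<phi> t) = \<Psi> y + (J y - J z) * D y"
    unfolding \<Psi>_def using assms by (intro shiftJ) auto
  ultimately show ?thesis by (simp add: algebra_simps)
qed

lemma psi_ge: assumes "0 \<le> y" "y \<le> z" "z \<le> tb"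
  shows "\<Psi> y - \<Psi> z = - (J y - J z) * D y + integral {y..z} (\<lambda>t. (J t - J z) * \<phi> t)"
proof -
  have "\<Psi> y = integral {y..tb} (\<lambda>t. (J t - J z) * \<phi> t) + (J z - J y) * D y"
    unfolding \<Psi>_def using assms by (intro shiftJ) auto
  moreover have "integral {y..tb} (\<lambda>t. (J t - J z) * \<phi> t) = integral {y..z} (\<lambda>t. (J t - J z) * \<phi> t) + \<Psi> z"
    unfolding \<Psi>_def using assms by (intro icomb[symmetric] MB_integrable MB_J\<phi>) auto
  ultimately show ?thesis by (simp add: algebra_simps)
qed

lemma err_bound: assumes "0 \<le> a" "a \<le> b" "b \<le> tb" "0 \<le> e" "\<And>t. t \<in> {a..b} \<Longrightarrow> \<bar>J t - J c\<bar> \<le> e"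
    and B: "\<And>t. t \<in> {0..tb} \<Longrightarrow> \<bar>\<phi> t\<bar> \<le> B"
  shows "\<bar>integral {a..b} (\<lambda>t. (J t - J c) * \<phi> t)\<bar> \<le> e * B * (b - a)"
proof -
  have B0: "B \<ge> 0" using B[of 0] tb_pos by auto
  have i: "((\<lambda>t. (J t - J c) * \<phi> t) has_integral integral {a..b} (\<lambda>t. (J t - J c) * \<phi> t)) {a..b}"
    using assms by (intro integrable_integral MB_integrable MB_J\<phi>) auto
  have "norm (integral {a..b} (\<lambda>t. (J t - J c) * \<phi> t)) \<le> (e * B) * measure lborel {a..b}"
  proof (rule has_integral_bound_real[where S="{}", OF _ _ i])
    show "0 \<le> e * B" using assms B0 by auto
    fix t assume "t \<in> {a..b} - {}"
    then have "\<bar>J t - J c\<bar> \<le> e" "\<bar>\<phi> t\<bar> \<le> B" using assms B by auto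
    then show "norm ((J t - J c) * \<phi> t) \<le> e * B" by (simp add: abs_mult mult_mono)
  qed simp
  then show ?thesis using assms by (simp add: content_real)
qed

lemma Psi_deriv: assumes a: "0 \<le> a" and z: "z \<in> {a..tb}"
  shows "(\<Psi> has_real_derivative - (J' z * D z)) (at z within {a..tb})"
proof -
  obtain B where B: "B > 0" "\<And>t. t \<in> {0..tb} \<Longrightarrow> \<bar>\<phi> t\<bar> \<le> B" using \<phi>_bound by auto
  define Err where "Err y = \<Psi> y - \<Psi> z + (J y - J z) * D y" for y
  have eqf: "(\<lambda>y. (\<Psi> y - \<Psi> z) / (y - z)) = (\<lambda>y. (- ((J y - J z) / (y - z))) * D y + Err y / (y - z))"
  proof (rule ext)
    fix y
    have "Err y / (y - z) = (\<Psi> y - \<Psi> z) / (y - z) + ((J y - J z) / (y - z)) * D y"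
      by (simp add: Err_def add_divide_distrib)
    then show "(\<Psi> y - \<Psi> z) / (y - z) = (- ((J y - J z) / (y - z))) * D y + Err y / (y - z)"
      by simp
  qed
  have zS: "z \<in> {0..tb}" using z a by auto
  have t1: "((\<lambda>y. (J y - J z) / (y - z)) \<longlongrightarrow> J' z) (at z within {a..tb})"
    using DERIV_subset[OF J_deriv[OF zS], of "{a..tb}"] a by (simp add: has_field_derivative_iff)
  have t2: "(D \<longlongrightarrow> D z) (at z within {a..tb})"
    using continuous_on_subset[OF D_cont, of "{a..tb}"] a z by (auto simp: continuous_on_def)
  have t3: "((\<lambda>y. Err y / (y - z)) \<longlongrightarrow> 0) (at z within {a..tb})"
    unfolding Lim_within
  proof (intro allI impI)
    fix e :: real assume e: "e > 0"
    have eB: "e / (2 * B) > 0" using e B by auto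
    obtain d where d: "d > 0" "\<And>t. t \<in> {0..tb} \<Longrightarrow> dist t z < d \<Longrightarrow> dist (J t) (J z) < e / (2 * B)"
      using J_cont zS eB unfolding continuous_on_iff by metis
    show "\<exists>d>0. \<forall>y\<in>{a..tb}. 0 < dist y z \<and> dist y z < d \<longrightarrow> dist (Err y / (y - z)) 0 < e"
    proof (intro exI[of _ d] conjI ballI impI)
      show "d > 0" by fact
      fix y assume y: "y \<in> {a..tb}" and yd: "0 < dist y z \<and> dist y z < d"
      have bnd: "\<bar>Err y\<bar> \<le> e / (2 * B) * B * \<bar>y - z\<bar>"
      proof (cases "z \<le> y")
        case True
        have "\<bar>integral {z..y} (\<lambda>t. (J t - J z) * \<phi> t)\<bar> \<le> e / (2 * B) * B * (y - z)"
        proof (rule err_bound)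
          fix t assume t: "t \<in> {z..y}"
          then have "dist t z < d" using yd True by (auto simp: dist_real_def)
          then show "\<bar>J t - J z\<bar> \<le> e / (2 * B)" using d(2)[of t] t zS y by (auto simp: dist_real_def)
        qed (use True zS y eB B in auto)
        moreover have "Err y = - integral {z..y} (\<lambda>t. (J t - J z) * \<phi> t)"
          using psi_le[of z y] True zS y unfolding Err_def by (auto simp: algebra_simps)
        ultimately show ?thesis using True by simp
      next
        case False
        have "\<bar>integral {y..z} (\<lambda>t. (J t - J z) * \<phi> t)\<bar> \<le> e / (2 * B) * B * (z - y)"
        proof (rule err_bound)
          fix t assume t: "t \<in> {y..z}"
          then have "dist t z < d" using yd False by (auto simp: dist_real_def)
          then show "\<bar>J t - J z\<bar> \<le> e / (2 * B)" using d(2)[of t] t zS y a by (auto simp: dist_real_def)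
        qed (use False zS y eB B a in auto)
        moreover have "Err y = integral {y..z} (\<lambda>t. (J t - J z) * \<phi> t)"
          using psi_ge[of y z] False zS y a unfolding Err_def by (auto simp: algebra_simps)
        ultimately show ?thesis using False by simp
      qed
      have eq2: "e / (2 * B) * B = e / 2" using B by (simp add: field_simps)
      have "\<bar>Err y\<bar> \<le> e / 2 * \<bar>y - z\<bar>" using bnd unfolding eq2 .
      moreover have "\<bar>y - z\<bar> > 0" using yd by (simp add: dist_real_def)
      ultimately have "\<bar>Err y\<bar> / \<bar>y - z\<bar> \<le> e / 2" by (simp add: divide_le_eq)
      then have X: "\<bar>Err y / (y - z)\<bar> \<le> e / 2" by (simp only: abs_divide)
      have "e / 2 < e" using e by simp
      have "\<bar>Err y / (y - z)\<bar> < e" by (rule order.strict_trans1[OF X \<open>e / 2 < e\<close>])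
      then show "dist (Err y / (y - z)) 0 < e" by (simp add: dist_real_def)
    qed
  qed
  have "((\<lambda>y. (- ((J y - J z) / (y - z))) * D y + Err y / (y - z)) \<longlongrightarrow> (- J' z) * D z + 0) (at z within {a..tb})"
    by (rule tendsto_add[OF tendsto_mult[OF tendsto_minus[OF t1] t2] t3])
  then show ?thesis unfolding has_field_derivative_iff eqf by simp
qed

lemma abel: assumes "a \<in> {0..tb}" shows "((\<lambda>z. J' z * D z) has_integral \<Psi> a) {a..tb}"
proof -
  have "((\<lambda>z. - (J' z * D z)) has_integral \<Psi> tb - \<Psi> a) {a..tb}"
  proof (rule fundamental_theorem_of_calculus)
    show "a \<le> tb" using assms by auto
    fix x assume "x \<in> {a..tb}"
    then show "(\<Psi> has_vector_derivative - (J' x * D x)) (at x within {a..tb})"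
      using Psi_deriv[of a x] assms by (simp add: has_real_derivative_iff_has_vector_derivative)
  qed
  then have "((\<lambda>z. - (- (J' z * D z))) has_integral - (\<Psi> tb - \<Psi> a)) {a..tb}"
    by (rule has_integral_neg)
  then show ?thesis by (simp add: \<Psi>_def)
qed

lemma D_zero: assumes a: "a \<in> {0..tb}" and P: "\<Psi> a \<le> 0" and pos: "\<And>z. z \<in> {a..tb} \<Longrightarrow> J' z > 0"
  and z: "z \<in> {a..tb}" shows "D z = 0"
proof (cases "a = tb")
  case True then show ?thesis using z D_tb by auto
next
  case False
  then have atb: "a < tb" using a by auto
  have hi: "((\<lambda>z. J' z * D z) has_integral \<Psi> a) {a..tb}" by (rule abel[OF a])
  have nn: "0 \<le> J' x * D x" if x: "x \<in> {a..tb}" for x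
  proof -
    have "J' x > 0" "D x \<ge> 0" using pos[OF x] D_nonneg[of x] x a by auto
    then show ?thesis by simp
  qed
  have "\<Psi> a \<ge> 0" by (rule has_integral_nonneg[OF hi nn])
  then have "\<Psi> a = 0" using P by auto
  then have hi0: "((\<lambda>z. J' z * D z) has_integral 0) (cbox a tb)" using hi by simp
  have cont: "continuous_on (cbox a tb) (\<lambda>z. J' z * D z)"
    using a by (auto intro!: continuous_on_mult continuous_on_subset[OF J'_cont] continuous_on_subset[OF D_cont])
  have "J' z * D z = 0"
    by (rule has_integral_0_cbox_imp_0[OF cont _ hi0]) (use nn z atb in \<open>auto simp: mem_box\<close>)
  then show ?thesis using pos[OF z] by simp
qed

lemma NEG: assumes y: "y \<in> {0..tb}" "y < tb" and gt: "F y < s y"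
  shows "\<exists>c>y. c \<le> tb \<and> (\<forall>c'. y < c' \<and> c' \<le> c \<longrightarrow> integral {y..c'} \<phi> < 0)"
proof -
  obtain d where d: "d > 0" "\<And>t. t \<in> {0..tb} \<Longrightarrow> dist t y < d \<Longrightarrow> dist (F t) (F y) < s y - F y"
    using F_cont y gt unfolding continuous_on_iff by (metis diff_gt_0_iff_gt)
  define c where "c = min (y + d/2) tb"
  have "y < c" "c \<le> tb" using d y by (auto simp: c_def)
  moreover have "integral {y..c'} \<phi> < 0" if c': "y < c'" "c' \<le> c" for c'
  proof -
    have c'S: "c' \<in> {0..tb}" using c' y \<open>c \<le> tb\<close> by auto
    have "dist c' y < d" using c' d by (auto simp: c_def dist_real_def)
    then have Fc: "F c' < s y" using d(2)[OF c'S] by (auto simp: dist_real_def)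
    have "integral {y..c'} \<phi> \<le> integral {y..c'} (\<lambda>t. (F c' - s y) * f t)"
    proof (rule Henstock_Kurzweil_Integration.integral_le)
      show "\<phi> integrable_on {y..c'}" using y c'S by (intro \<phi>_int) auto
      show "(\<lambda>t. (F c' - s y) * f t) integrable_on {y..c'}"
        using y c'S by (intro MB_integrable MB_mult MB_const MB_f) auto
      fix t assume t: "t \<in> {y..c'}"
      have "F t \<le> F c'" using t y c'S by (intro F_mono) auto
      moreover have "s y \<le> s t" using t y c'S by (intro s_mono') auto
      moreover have "f t > 0" using t y c'S f_pos by auto
      ultimately show "\<phi> t \<le> (F c' - s y) * f t" unfolding \<phi>_def by (intro mult_right_mono) auto
    qed
    also have "\<dots> = (F c' - s y) * integral {y..c'} f" by simp
    also have "\<dots> < 0" using Fc int_f_pos[of y c'] y c' c'S by (intro mult_neg_pos) auto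
    finally show ?thesis .
  qed
  ultimately show ?thesis by blast
qed

lemma POS: assumes y: "y \<in> {0..tb}" "0 < y" and lt: "s y < F y"
  shows "\<exists>c<y. 0 \<le> c \<and> (\<forall>c'. c \<le> c' \<and> c' < y \<longrightarrow> integral {c'..y} \<phi> > 0)"
proof -
  obtain d where d: "d > 0" "\<And>t. t \<in> {0..tb} \<Longrightarrow> dist t y < d \<Longrightarrow> dist (F t) (F y) < F y - s y"
    using F_cont y lt unfolding continuous_on_iff by (metis diff_gt_0_iff_gt)
  define c where "c = max (y - d/2) 0"
  have "c < y" "0 \<le> c" using d y by (auto simp: c_def)
  moreover have "integral {c'..y} \<phi> > 0" if c': "c \<le> c'" "c' < y" for c'
  proof -
    have c'S: "c' \<in> {0..tb}" using c' y \<open>0 \<le> c\<close> by auto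
    have "dist c' y < d" using c' d by (auto simp: c_def dist_real_def)
    then have Fc: "s y < F c'" using d(2)[OF c'S] by (auto simp: dist_real_def)
    have "0 < (F c' - s y) * integral {c'..y} f" using Fc int_f_pos[of c' y] y c' c'S by (intro mult_pos_pos) auto
    also have "\<dots> = integral {c'..y} (\<lambda>t. (F c' - s y) * f t)" by simp
    also have "\<dots> \<le> integral {c'..y} \<phi>"
    proof (rule Henstock_Kurzweil_Integration.integral_le)
      show "\<phi> integrable_on {c'..y}" using y c'S by (intro \<phi>_int) auto
      show "(\<lambda>t. (F c' - s y) * f t) integrable_on {c'..y}"
        using y c'S by (intro MB_integrable MB_mult MB_const MB_f) auto
      fix t assume t: "t \<in> {c'..y}"
      have "F c' \<le> F t" using t y c'S by (intro F_mono) auto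
      moreover have "s t \<le> s y" using t y c'S by (intro s_mono') auto
      moreover have "f t > 0" using t y c'S f_pos by auto
      ultimately show "(F c' - s y) * f t \<le> \<phi> t" unfolding \<phi>_def by (intro mult_right_mono) auto
    qed
    finally show ?thesis .
  qed
  ultimately show ?thesis by blast
qed

lemma s_eq_F: assumes a: "a \<in> {0..tb}" and Dz: "\<And>z. z \<in> {a..tb} \<Longrightarrow> D z = 0" and y: "y \<in> {a<..<tb}"
  shows "s y = F y"
proof (rule ccontr)
  assume ne: "s y \<noteq> F y"
  have yS: "y \<in> {0..tb}" using a y by auto
  show False
  proof (cases "F y < s y")
    case True
    obtain c where c: "y < c" "c \<le> tb" "integral {y..c} \<phi> < 0" using NEG[OF yS _ True] y by auto
    have "D y = integral {y..c} \<phi> + D c" using D_split[of y c] yS c by auto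
    moreover have "D y = 0" "D c = 0" using Dz y c by auto
    ultimately show False using c by auto
  next
    case False
    then have lt: "s y < F y" using ne by auto
    obtain c where c: "c < y" "0 \<le> c" "\<And>c'. c \<le> c' \<and> c' < y \<Longrightarrow> integral {c'..y} \<phi> > 0"
      using POS[OF yS _ lt] y a by auto
    define c' where "c' = max c a"
    have c': "c \<le> c'" "c' < y" "a \<le> c'" using c y by (auto simp: c'_def)
    have "D c' = integral {c'..y} \<phi> + D y" using D_split[of c' y] yS c' a by auto
    moreover have "D y = 0" "D c' = 0" using Dz y c' by auto
    ultimately show False using c(3)[of c'] c' by auto
  qed
qed

lemma final:
  assumes maxi: "\<forall>s'\<in>S0 tb f F. R0 tb f F s' \<le> R0 tb f F s"
    and e0: "\<epsilon> > 0" and etb: "\<epsilon> \<le> tb"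
    and eps: "\<forall>m\<in>{tb-\<epsilon>..tb}. (\<forall>x\<in>{0..m}. J x \<le> J m) \<and> (\<forall>z\<in>{m..tb}. J' z > 0)"
  shows "\<forall>y\<in>{tb-\<epsilon><..<tb}. s y = F y"
proof -
  define A where "A = {x\<in>{tb-\<epsilon>..tb}. s x \<le> F x}"
  have tbA: "tb \<in> A" using s_range[of tb] F_tb e0 tb_pos by (auto simp: A_def)
  have Ane: "A \<noteq> {}" using tbA by auto
  have Abdd: "bdd_below A" by (auto simp: A_def bdd_below_def)
  define ms where "ms = Inf A"
  have ms_ge: "tb - \<epsilon> \<le> ms" unfolding ms_def by (rule cInf_greatest[OF Ane]) (auto simp: A_def)
  have ms_le: "ms \<le> tb" unfolding ms_def by (rule cInf_lower[OF tbA Abdd])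
  have msS: "ms \<in> {0..tb}" using ms_ge ms_le etb by auto
  have s_ms: "s ms \<le> F ms"
  proof (rule ccontr)
    assume "\<not> s ms \<le> F ms"
    then have lt: "F ms < s ms" by auto
    obtain d where d: "d > 0" "\<And>t. t \<in> {0..tb} \<Longrightarrow> dist t ms < d \<Longrightarrow> dist (F t) (F ms) < s ms - F ms"
      using F_cont msS lt unfolding continuous_on_iff by (metis diff_gt_0_iff_gt)
    have "Inf A < ms + d" using d by (simp add: ms_def)
    then obtain a where a: "a \<in> A" "a < ms + d" using cInf_less_iff[OF Ane Abdd] by auto
    have "ms \<le> a" unfolding ms_def by (rule cInf_lower[OF a(1) Abdd])
    have aS: "a \<in> {0..tb}" using a(1) etb by (auto simp: A_def)
    have "dist a ms < d" using a \<open>ms \<le> a\<close> by (simp add: dist_real_def)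
    then have "F a < s ms" using d(2)[OF aS] by (auto simp: dist_real_def)
    moreover have "s ms \<le> s a" using \<open>ms \<le> a\<close> msS aS by (intro s_mono') auto
    moreover have "s a \<le> F a" using a(1) by (simp add: A_def)
    ultimately show False by simp
  qed
  have good: "\<And>x. x \<in> {0..ms} \<Longrightarrow> s x \<le> F ms"
    using s_ms s_mono' msS by (meson atLeastAtMost_iff order_trans)
  interpret P: pert tb f F f' s ms
    by unfold_locales (use msS good in auto)
  obtain L where L: "0 \<le> L" "L \<le> F ms" "P.r L = D ms" using P.L_exists by auto
  interpret P2: pert2 tb f F f' s ms L
    by unfold_locales (use L in auto)
  have epsm: "(\<forall>x\<in>{0..ms}. J x \<le> J ms) \<and> (\<forall>z\<in>{ms..tb}. J' z > 0)"
    using eps ms_ge ms_le by auto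
  have "R0 tb f F P2.sp - R0 tb f F s \<ge> integral {ms..tb} (\<lambda>t. (J t - J ms) * \<phi> t)"
    using P2.gain epsm by auto
  moreover have "R0 tb f F P2.sp \<le> R0 tb f F s" using maxi P2.sp_S0 by auto
  ultimately have "\<Psi> ms \<le> 0" unfolding \<Psi>_def by linarith
  then have Dz: "\<And>z. z \<in> {ms..tb} \<Longrightarrow> D z = 0"
    using D_zero[OF msS] epsm by auto
  have ms_eq: "ms = tb - \<epsilon>"
  proof (rule ccontr)
    assume "ms \<noteq> tb - \<epsilon>"
    then have x0: "tb - \<epsilon> < ms" using ms_ge by auto
    define x0 where "x0 = tb - \<epsilon>"
    have x0S: "x0 \<in> {0..tb}" "x0 < tb" using etb e0 by (auto simp: x0_def)
    have "x0 \<notin> A"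
    proof
      assume "x0 \<in> A" then have "ms \<le> x0" unfolding ms_def by (rule cInf_lower[OF _ Abdd])
      then show False using x0 by (simp add: x0_def)
    qed
    then have "F x0 < s x0" using x0S by (auto simp: A_def x0_def)
    then obtain c where c: "x0 < c" "c \<le> tb" "\<And>c'. x0 < c' \<and> c' \<le> c \<Longrightarrow> integral {x0..c'} \<phi> < 0"
      using NEG[OF x0S] by auto
    define c' where "c' = min c ms"
    have c': "x0 < c'" "c' \<le> c" "c' \<le> ms" using c x0 by (auto simp: c'_def x0_def)
    have neg: "integral {x0..c'} \<phi> < 0" using c(3) c' by auto
    define g0 where "g0 t = (if t = ms then 0 else \<phi> t)" for t
    have "integral {c'..ms} \<phi> = integral {c'..ms} g0"
      by (rule spike1[of _ _ ms]) (auto simp: g0_def)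
    also have "\<dots> \<le> integral {c'..ms} (\<lambda>t. 0)"
    proof (rule Henstock_Kurzweil_Integration.integral_le)
      show "g0 integrable_on {c'..ms}"
        by (rule integrable_spike[OF \<phi>_int[of c' ms], of "{ms}"]) (use c' x0S msS in \<open>auto simp: g0_def\<close>)
      fix t assume t: "t \<in> {c'..ms}"
      show "g0 t \<le> 0"
      proof (cases "t = ms")
        case False
        then have "t \<notin> A"
          using t ms_def cInf_lower[OF _ Abdd, of t] by fastforce
        moreover have tS: "t \<in> {tb-\<epsilon>..tb}" using t c' x0 ms_le by (auto simp: x0_def)
        ultimately have "F t < s t" by (auto simp: A_def)
        moreover have "f t > 0" using tS etb f_pos by auto
        ultimately show ?thesis using False by (simp add: g0_def \<phi>_def mult_neg_pos less_imp_le)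
      qed (simp add: g0_def)
    qed (rule integrable_0)
    finally have "integral {c'..ms} \<phi> \<le> 0" by simp
    moreover have "D x0 = integral {x0..c'} \<phi> + D c'" using D_split[of x0 c'] x0S c' ms_le by auto
    moreover have "D c' = integral {c'..ms} \<phi> + D ms" using D_split[of c' ms] x0S c' ms_le by auto
    moreover have "D ms = 0" using Dz ms_le by auto
    moreover have "D x0 \<ge> 0" using D_nonneg x0S by auto
    ultimately show False using neg by linarith
  qed
  show ?thesis
  proof
    fix y assume y: "y \<in> {tb-\<epsilon><..<tb}"
    show "s y = F y" by (rule s_eq_F[OF msS Dz]) (use y ms_eq in auto)
  qed
qed

end

theorem mainTheorem12:
  fixes tb :: real and f F f' :: "real \<Rightarrow> real"
  assumes tb_pos: "0 < tb"
    and f_cont: "continuous_on {0..tb} f"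
    and f_pos: "\<And>\<theta>. \<theta> \<in> {0..tb} \<Longrightarrow> 0 < f \<theta>"
    and F_def: "\<And>\<theta>. \<theta> \<in> {0..tb} \<Longrightarrow> F \<theta> = (LINT t:{0..\<theta>}|lborel. f t)"
    and F_tb: "F tb = 1"
    and f_C1: "continuous_on {0..tb} f'"
    and f_deriv: "\<And>\<theta>. \<theta> \<in> {0..tb} \<Longrightarrow> (f has_real_derivative f' \<theta>) (at \<theta> within {0..tb})"
  shows "\<exists>\<epsilon>>0. \<epsilon> \<le> tb \<and>
           (\<forall>s\<in>S0 tb f F. (\<forall>s'\<in>S0 tb f F. R0 tb f F s' \<le> R0 tb f F s) \<longrightarrow>
              (AE \<theta> in lborel. \<theta> \<in> {tb - \<epsilon>..tb} \<longrightarrow> s \<theta> = F \<theta>))"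
proof -
  interpret setting tb f F f'
    by unfold_locales (use assms in auto)
  obtain \<epsilon> where e: "\<epsilon> > 0" "\<epsilon> \<le> tb"
    "\<forall>m\<in>{tb-\<epsilon>..tb}. (\<forall>x\<in>{0..m}. J x \<le> J m) \<and> (\<forall>z\<in>{m..tb}. J' z > 0)"
    using eps_exists by auto
  show ?thesis
  proof (intro exI[of _ \<epsilon>] conjI ballI impI)
    show "\<epsilon> > 0" "\<epsilon> \<le> tb" using e by auto
    fix s assume sS: "s \<in> S0 tb f F" and maxi: "\<forall>s'\<in>S0 tb f F. R0 tb f F s' \<le> R0 tb f F s"
    interpret sol tb f F f' s by unfold_locales (rule sS)
    have eq: "\<forall>y\<in>{tb-\<epsilon><..<tb}. s y = F y" by (rule final[OF maxi e])
    have "AE \<theta> in lborel. \<theta> \<noteq> tb - \<epsilon>" by (rule AE_lborel_singleton)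
    moreover have "AE \<theta> in lborel. \<theta> \<noteq> tb" by (rule AE_lborel_singleton)
    ultimately show "AE \<theta> in lborel. \<theta> \<in> {tb - \<epsilon>..tb} \<longrightarrow> s \<theta> = F \<theta>"
      by eventually_elim (use eq in auto)
  qed
qed

end
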